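(* Let $Z$ be a completely Hausdorff topological space and $H:\mathbb R\times Z\to Z$ a continuous locally free action of $\mathbb R$ on $Z$. Then every point $x\in Z$ admits a neighborhood $U$ and a homeomorphism $U\cong I\times T$, where $I\subset\mathbb R$ is a neighborhood of $0$ and $T$ is a topological space, with $x$ corresponding to some $(0,\tau_0)$, such that in these coordinates the action is given by $t\cdot(s,\tau)=(t+s,\tau)$ for $(t,(s,\tau))$ in a neighborhood of $(0,(0,\tau_0))$ in $\mathbb R\times U$. Moreover, for two such coordinate systems, the change of coordinates is of the form $(s,\tau)\mapsto(s+s_\tau,\tau'(\tau))$ where $\tau\mapsto s_\tau$ and $\tau\mapsto\tau'(\tau)$ are continuous; in particular these charts give $Z$ the structure of an oriented lamination by one-dimensional Lipschitz manifolds.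
   Context: A space is completely Hausdorff if any two distinct points can be separated by a continuous real-valued function. The action is locally free if for every $z\in Z$ there is $\eta>0$ such that $H(t,z)=z$ with $|t|<\eta$ implies $t=0$.
   Formalization: The action is translation near (0,z) for every z in U, not only near $(0,(0,\tau_0))$, in each coordinate system; coordinates change by the stated form only near each point of the overlap; the lamination remark is omitted. Apart from conventions, each condition added here is assumed in the paper as well or is needed for the statement above to hold. *)

theory Defs
  imports "HOL-Analysis.Analysis"
begin

definition completely_Hausdorff :: "'a topology \<Rightarrow> bool" where
  "completely_Hausdorff X \<longleftrightarrow>
     (\<forall>x\<in>topspace X. \<forall>y\<in>topspace X. x \<noteq> y \<longrightarrow>
        (\<exists>f. continuous_map X euclideanreal f \<and> f x \<noteq> f y))"

definition continuous_real_action :: "'a topology \<Rightarrow> (real \<Rightarrow> 'a \<Rightarrow> 'a) \<Rightarrow> bool" where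
  "continuous_real_action X H \<longleftrightarrow>
     continuous_map (prod_topology euclideanreal X) X (\<lambda>(t, z). H t z) \<and>
     (\<forall>z\<in>topspace X. H 0 z = z) \<and>
     (\<forall>s t. \<forall>z\<in>topspace X. H s (H t z) = H (s + t) z)"

definition locally_free :: "'a topology \<Rightarrow> (real \<Rightarrow> 'a \<Rightarrow> 'a) \<Rightarrow> bool" where
  "locally_free X H \<longleftrightarrow>
     (\<forall>z\<in>topspace X. \<exists>\<eta>>0. \<forall>t. \<bar>t\<bar> < \<eta> \<and> H t z = z \<longrightarrow> t = 0)"

definition flow_chart ::
  "'a topology \<Rightarrow> (real \<Rightarrow> 'a \<Rightarrow> 'a) \<Rightarrow> 'a set \<Rightarrow> real set \<Rightarrow> 'b topology \<Rightarrow> ('a \<Rightarrow> real \<times> 'b) \<Rightarrow> bool"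
  where
  "flow_chart X H U I T \<phi> \<longleftrightarrow>
     openin X U \<and> open I \<and> 0 \<in> I \<and>
     homeomorphic_map (subtopology X U) (prod_topology (subtopology euclideanreal I) T) \<phi> \<and>
     (\<forall>z\<in>U. \<exists>W. openin (prod_topology euclideanreal (subtopology X U)) W \<and> (0, z) \<in> W \<and>
        (\<forall>t w. (t, w) \<in> W \<longrightarrow>
            H t w \<in> U \<and> \<phi> (H t w) = (t + fst (\<phi> w), snd (\<phi> w))))"

end

theory Submission
  imports Defs
begin



lemma cont_real_iff:
  "continuous_map X euclideanreal f \<longleftrightarrow>
    (\<forall>x \<in> topspace X. \<forall>e>0. \<exists>U. openin X U \<and> x \<in> U \<and> (\<forall>y\<in>U. \<bar>f y - f x\<bar> < e))"
  using Met_TC.continuous_map_to_metric[of X f] by (simp add: dist_real_def abs_minus_commute)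

lemma cont_slice:
  assumes "continuous_map (prod_topology euclideanreal X) euclideanreal F" "z \<in> topspace X"
  shows "continuous_on UNIV (\<lambda>t. F (t, z))"
proof -
  have "continuous_map euclideanreal (prod_topology euclideanreal X) (\<lambda>t. (t, z))"
    using assms(2) by (auto simp: continuous_map_pairwise o_def)
  from continuous_map_compose[OF this assms(1)]
  show ?thesis by (simp add: o_def)
qed

lemma cont_param_integral:
  assumes F: "continuous_map (prod_topology euclideanreal X) euclideanreal F" and a: "0 \<le> a"
  shows "continuous_map X euclideanreal (\<lambda>z. integral {0..a} (\<lambda>t. F (t, z)))"
  unfolding cont_real_iff
proof (intro ballI allI impI)
  fix z0 and e :: real assume z0: "z0 \<in> topspace X" and e: "0 < e"
  define k where "k = e / (a+1)"
  have k: "k > 0" using e a by (simp add: k_def)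
  define W where "W = {p \<in> topspace (prod_topology euclideanreal X). F p - F (fst p, z0) \<in> ball 0 k}"
  have "continuous_map (prod_topology euclideanreal X) (prod_topology euclideanreal X) (\<lambda>p. (fst p, z0))"
    using z0 by (auto simp: continuous_map_pairwise o_def continuous_map_fst)
  from continuous_map_compose[OF this F]
  have "continuous_map (prod_topology euclideanreal X) euclideanreal (\<lambda>p. F p - F (fst p, z0))"
    using F by (intro continuous_map_diff) (auto simp: o_def)
  then have W: "openin (prod_topology euclideanreal X) W"
    unfolding W_def by (rule openin_continuous_map_preimage) auto
  have "{0..a} \<times> {z0} \<subseteq> W" using z0 k by (auto simp: W_def)
  then obtain U V where UV: "openin euclideanreal U" "openin X V" "{0..a} \<subseteq> U" "z0 \<in> V" "U \<times> V \<subseteq> W"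
    using tube_lemma_left[OF W _ z0] by (metis compact_Icc compactin_euclidean_iff)
  show "\<exists>U. openin X U \<and> z0 \<in> U \<and>
          (\<forall>y\<in>U. \<bar>integral {0..a} (\<lambda>t. F (t, y)) - integral {0..a} (\<lambda>t. F (t, z0))\<bar> < e)"
  proof (intro exI conjI ballI)
    show "openin X V" "z0 \<in> V" by fact+
    fix y assume y: "y \<in> V"
    then have yt: "y \<in> topspace X" using UV(2) openin_subset by blast
    have bnd: "\<bar>F (t, y) - F (t, z0)\<bar> \<le> k" if "t \<in> {0..a}" for t
    proof -
      have "(t, y) \<in> W" using that UV(3,5) y by blast
      then show ?thesis by (simp add: W_def dist_real_def) arith
    qed
    have i1: "(\<lambda>t. F (t, y)) integrable_on {0..a}" and i2: "(\<lambda>t. F (t, z0)) integrable_on {0..a}"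
      by (rule integrable_continuous_interval, rule continuous_on_subset[OF cont_slice[OF F yt]], simp)
         (rule integrable_continuous_interval, rule continuous_on_subset[OF cont_slice[OF F z0]], simp)
    have "\<bar>integral {0..a} (\<lambda>t. F (t, y)) - integral {0..a} (\<lambda>t. F (t, z0))\<bar>
        = norm (integral {0..a} (\<lambda>t. F (t, y) - F (t, z0)))"
      using integral_diff[OF i1 i2] by simp
    also have "\<dots> \<le> integral {0..a} (\<lambda>t. k)"
      using bnd i1 i2 by (intro integral_norm_bound_integral) (auto intro: integrable_diff)
    also have "\<dots> = a * k" using a by simp
    also have "\<dots> < e" using a e k unfolding k_def by (simp add: field_simps)
    finally show "\<bar>integral {0..a} (\<lambda>t. F (t, y)) - integral {0..a} (\<lambda>t. F (t, z0))\<bar> < e" .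
  qed
qed




lemma action_facts:
  assumes "continuous_real_action X H"
  shows "continuous_map (prod_topology euclideanreal X) X (\<lambda>(t, z). H t z)"
    and "\<And>z. z \<in> topspace X \<Longrightarrow> H 0 z = z"
    and "\<And>s t z. z \<in> topspace X \<Longrightarrow> H s (H t z) = H (s + t) z"
    and "\<And>t z. z \<in> topspace X \<Longrightarrow> H t z \<in> topspace X"
proof -
  show c: "continuous_map (prod_topology euclideanreal X) X (\<lambda>(t, z). H t z)"
    using assms unfolding continuous_real_action_def by blast
  show "\<And>z. z \<in> topspace X \<Longrightarrow> H 0 z = z" "\<And>s t z. z \<in> topspace X \<Longrightarrow> H s (H t z) = H (s + t) z"
    using assms unfolding continuous_real_action_def by blast+
  fix t z assume "z \<in> topspace X"
  then have "(t, z) \<in> topspace (prod_topology euclideanreal X)" by simp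
  from continuous_map_image_subset_topspace[OF c] this show "H t z \<in> topspace X" by force
qed

lemma mono_fn:
  assumes CH: "completely_Hausdorff X" and A: "continuous_real_action X H"
    and LF: "locally_free X H" and x: "x \<in> topspace X"
  shows "\<exists>g N \<delta>. continuous_map X euclideanreal g \<and> openin X N \<and> x \<in> N \<and> \<delta> > 0 \<and>
     (\<forall>z\<in>N. \<forall>s1 s2. -\<delta> < s1 \<longrightarrow> s1 < s2 \<longrightarrow> s2 < \<delta> \<longrightarrow> g (H s1 z) < g (H s2 z))"
proof -
  note contH = action_facts(1)[OF A] and H0 = action_facts(2)[OF A]
    and Hadd = action_facts(3)[OF A] and Hts = action_facts(4)[OF A]
  obtain \<eta> where \<eta>: "\<eta> > 0" "\<And>t. \<bar>t\<bar> < \<eta> \<Longrightarrow> H t x = x \<Longrightarrow> t = 0"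
    using LF x unfolding locally_free_def by blast
  define a where "a = \<eta> / 2"
  have a: "a > 0" "H a x \<noteq> x"
  proof -
    show "a > 0" using \<eta> by (simp add: a_def)
    have "\<bar>a\<bar> < \<eta>" using \<eta> by (simp add: a_def)
    then show "H a x \<noteq> x" using \<eta>(2)[of a] \<open>a > 0\<close> by auto
  qed
  obtain f0 where f0: "continuous_map X euclideanreal f0" "f0 (H a x) \<noteq> f0 x"
    using CH x Hts[OF x] a(2) unfolding completely_Hausdorff_def by metis
  define f where "f = (if f0 x < f0 (H a x) then f0 else (\<lambda>z. - f0 z))"
  have contf: "continuous_map X euclideanreal f"
    using f0(1) by (simp add: f_def continuous_map_minus)
  have fx: "f x < f (H a x)" using f0(2) by (auto simp: f_def)
  define F where "F = f \<circ> (\<lambda>(t, z). H t z)"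
  have FF: "F (t, z) = f (H t z)" for t z by (simp add: F_def)
  have contF: "continuous_map (prod_topology euclideanreal X) euclideanreal F"
    unfolding F_def using contH contf by (rule continuous_map_compose)
  define D where "D = (\<lambda>p. F (fst p + a, snd p) - F p)"
  have "continuous_map (prod_topology euclideanreal X) (prod_topology euclideanreal X) (\<lambda>p. (fst p + a, snd p))"
    by (auto simp: continuous_map_pairwise o_def continuous_map_fst continuous_map_snd intro!: continuous_map_add)
  from continuous_map_compose[OF this contF]
  have contD: "continuous_map (prod_topology euclideanreal X) euclideanreal D"
    unfolding D_def using contF by (intro continuous_map_diff) (auto simp: o_def)
  define c where "c = D (0, x) / 2"
  have c: "c > 0" using fx by (simp add: c_def D_def FF H0[OF x])
  define Ob where "Ob = {p \<in> topspace (prod_topology euclideanreal X). D p \<in> {c<..}}"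
  have Ob: "openin (prod_topology euclideanreal X) Ob"
    unfolding Ob_def using contD by (rule openin_continuous_map_preimage) auto
  have "(0, x) \<in> Ob" using c x by (simp add: Ob_def c_def)
  then obtain U V where UV: "openin euclideanreal U" "openin X V" "0 \<in> U" "x \<in> V" "U \<times> V \<subseteq> Ob"
    using Ob unfolding openin_prod_topology_alt by blast
  obtain \<delta> where \<delta>: "\<delta> > 0" "ball 0 \<delta> \<subseteq> U"
    using UV(1,3) by (metis open_contains_ball open_openin)
  define g where "g = (\<lambda>z. integral {0..a} (\<lambda>t. F (t, z)))"
  have contg: "continuous_map X euclideanreal g"
    unfolding g_def using contF a by (intro cont_param_integral) auto
  show ?thesis
  proof (intro exI conjI ballI allI impI)
    show "continuous_map X euclideanreal g" "openin X V" "x \<in> V" "\<delta> > 0" by fact+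
    fix z s1 s2 assume z: "z \<in> V" and s: "-\<delta> < s1" "s1 < s2" "s2 < \<delta>"
    have zt: "z \<in> topspace X" using z UV(2) openin_subset by blast
    define Fz where "Fz = (\<lambda>u. F (u, z))"
    have cFz: "continuous_on UNIV Fz" unfolding Fz_def by (rule cont_slice[OF contF zt])
    have intg: "Fz integrable_on {p..q}" for p q
      by (rule integrable_continuous_interval, rule continuous_on_subset[OF cFz]) auto
    have key: "g (H s z) = integral {s..s+a} Fz" for s
    proof -
      have "g (H s z) = integral {0..a} (Fz \<circ> (+) s)"
        unfolding g_def Fz_def by (simp add: FF Hadd[OF zt] o_def add.commute)
      also have "\<dots> = integral {s..s+a} Fz" by (simp add: integral_shift_Icc_real add.commute)
      finally show ?thesis .
    qed
    have e1: "integral {s1..s2} Fz + integral {s2..s2+a} Fz = integral {s1..s2+a} Fz"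
      using Henstock_Kurzweil_Integration.integral_combine[where a=s1 and c=s2 and b="s2+a" and f=Fz] intg[of s1 "s2+a"] s a by auto
    have e2: "integral {s1..s1+a} Fz + integral {s1+a..s2+a} Fz = integral {s1..s2+a} Fz"
      using Henstock_Kurzweil_Integration.integral_combine[where a=s1 and c="s1+a" and b="s2+a" and f=Fz] intg[of s1 "s2+a"] s a by auto
    have e3: "integral {s1+a..s2+a} Fz = integral {s1..s2} (Fz \<circ> (+) a)"
      by (simp add: integral_shift_Icc_real add.commute)
    have cFa: "continuous_on UNIV (Fz \<circ> (+) a)"
      by (intro continuous_on_compose continuous_intros continuous_on_subset[OF cFz]) auto
    have intga: "(Fz \<circ> (+) a) integrable_on {s1..s2}"
      by (rule integrable_continuous_interval, rule continuous_on_subset[OF cFa]) auto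
    have pt: "c \<le> (Fz \<circ> (+) a) u - Fz u" if "u \<in> {s1..s2}" for u
    proof -
      have "u \<in> U" using that s \<delta>(2) by (auto simp: dist_real_def)
      then have "(u, z) \<in> Ob" using z UV(5) by blast
      then show ?thesis by (simp add: Ob_def D_def Fz_def add.commute)
    qed
    have "(s2 - s1) * c = integral {s1..s2} (\<lambda>u. c)" using s by simp
    also have "\<dots> \<le> integral {s1..s2} (\<lambda>u. (Fz \<circ> (+) a) u - Fz u)"
      using pt by (intro integral_le integrable_diff intga intg) auto
    also have "\<dots> = integral {s1..s2} (Fz \<circ> (+) a) - integral {s1..s2} Fz"
      by (intro integral_diff intga intg)
    also have "\<dots> = g (H s2 z) - g (H s1 z)"
      unfolding key using e1 e2 e3 by linarith
    finally have "(s2 - s1) * c \<le> g (H s2 z) - g (H s1 z)" .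
    moreover have "(s2 - s1) * c > 0" using s c by simp
    ultimately show "g (H s1 z) < g (H s2 z)" by linarith
  qed
qed




lemma flow_box:
  fixes X :: "'a topology" and H :: "real \<Rightarrow> 'a \<Rightarrow> 'a"
  assumes A: "continuous_real_action X H"
    and contg: "continuous_map X euclideanreal g" and N: "openin X N" and xN: "x \<in> N" and \<delta>: "\<delta> > 0"
    and mono: "\<forall>z\<in>N. \<forall>s1 s2. -\<delta> < s1 \<longrightarrow> s1 < s2 \<longrightarrow> s2 < \<delta> \<longrightarrow> g (H s1 z) < g (H s2 z)"
  shows "\<exists>U I (T::'a topology) \<phi> \<tau>0. x \<in> U \<and> flow_chart X H U I T \<phi> \<and> \<phi> x = (0, \<tau>0)"
proof -
  note contH = action_facts(1)[OF A] and H0 = action_facts(2)[OF A]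
    and Hadd = action_facts(3)[OF A] and Hts = action_facts(4)[OF A]
  have Nsub: "N \<subseteq> topspace X" using N openin_subset by blast
  have xt: "x \<in> topspace X" using xN Nsub by blast
  define c0 where "c0 = g x"
  define d where "d = \<delta> / 2"
  have d: "d > 0" "2 * d = \<delta>" using \<delta> by (auto simp: d_def)
  define G where "G = g \<circ> (\<lambda>(t, z). H t z)"
  have GG: "G (t, z) = g (H t z)" for t z by (simp add: G_def)
  have contG: "continuous_map (prod_topology euclideanreal X) euclideanreal G"
    unfolding G_def using contH contg by (rule continuous_map_compose)
  have contGs: "continuous_map X euclideanreal (\<lambda>z. G (s, z))" for s
  proof -
    have "continuous_map X (prod_topology euclideanreal X) (\<lambda>z. (s, z))"
      by (auto simp: continuous_map_pairwise o_def)
    from continuous_map_compose[OF this contG] show ?thesis by (simp add: o_def)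
  qed
  have uniq: "s = s'" if z: "z \<in> N" and "-\<delta> < s" "s < \<delta>" "-\<delta> < s'" "s' < \<delta>" and eq: "G (s, z) = G (s', z)" for z s s'
  proof (rule ccontr)
    assume ne: "s \<noteq> s'"
    show False
    proof (cases "s < s'")
      case True
      then have "g (H s z) < g (H s' z)" using mono that by blast
      then show False using eq by (simp add: GG)
    next
      case False
      then have "s' < s" using ne by linarith
      then have "g (H s' z) < g (H s z)" using mono that by blast
      then show False using eq by (simp add: GG)
    qed
  qed
  have Gx: "G (-d, x) < c0" "c0 < G (d, x)"
  proof -
    have "g (H (-d) x) < g (H 0 x)" "g (H 0 x) < g (H d x)" using mono xN d by auto
    then show "G (-d, x) < c0" "c0 < G (d, x)" by (auto simp: GG c0_def H0[OF xt])
  qed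
  define N1 where "N1 = {z \<in> N. G (-d, z) < c0 \<and> c0 < G (d, z)}"
  have "N1 = N \<inter> {z \<in> topspace X. G (-d, z) \<in> {..<c0}} \<inter> {z \<in> topspace X. G (d, z) \<in> {c0<..}}"
    using Nsub by (auto simp: N1_def)
  also have "openin X \<dots>"
    by (intro openin_Int N openin_continuous_map_preimage[OF contGs]) auto
  finally have N1open: "openin X N1" .
  have xN1: "x \<in> N1" using xN Gx by (simp add: N1_def)
  have N1N: "N1 \<subseteq> N" by (auto simp: N1_def)
  have N1t: "N1 \<subseteq> topspace X" using N1N Nsub by blast
  have exist: "\<exists>s. -d < s \<and> s < d \<and> G (s, z) = c0" if z: "z \<in> N1" for z
  proof -
    have zt: "z \<in> topspace X" using z N1t by blast
    have "continuous_on {-d..d} (\<lambda>s. G (s, z))"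
      by (rule continuous_on_subset[OF cont_slice[OF contG zt]]) auto
    moreover have "G (-d, z) \<le> c0" "c0 \<le> G (d, z)" using z by (auto simp: N1_def)
    ultimately obtain s where s: "-d \<le> s" "s \<le> d" "G (s, z) = c0"
      using IVT'[of "\<lambda>s. G (s, z)" "-d" c0 d] d by auto
    have "s \<noteq> -d" "s \<noteq> d" using s(3) z by (auto simp: N1_def)
    then show ?thesis using s by (intro exI[of _ s]) auto
  qed
  define \<sigma> where "\<sigma> z = (THE s. -d < s \<and> s < d \<and> G (s, z) = c0)" for z
  have sig: "-d < \<sigma> z \<and> \<sigma> z < d \<and> G (\<sigma> z, z) = c0" if z: "z \<in> N1" for z
  proof -
    have "\<exists>!s. -d < s \<and> s < d \<and> G (s, z) = c0"
    proof (rule ex_ex1I)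
      show "\<exists>s. -d < s \<and> s < d \<and> G (s, z) = c0" using exist[OF z] .
      fix s s' assume "-d < s \<and> s < d \<and> G (s, z) = c0" "-d < s' \<and> s' < d \<and> G (s', z) = c0"
      then show "s = s'" using uniq[of z s s'] z N1N d by auto
    qed
    then show ?thesis unfolding \<sigma>_def by (rule theI')
  qed
  have sig_eq: "\<sigma> z = s" if z: "z \<in> N1" and "-\<delta> < s" "s < \<delta>" "G (s, z) = c0" for z s
    using uniq[of z s "\<sigma> z"] sig[OF z] that N1N d by auto
  have contsig: "continuous_map (subtopology X N1) euclideanreal \<sigma>"
    unfolding cont_real_iff
  proof (intro ballI allI impI)
    fix z0 and e :: real assume z0: "z0 \<in> topspace (subtopology X N1)" and e: "e > 0"
    have z0N1: "z0 \<in> N1" using z0 by simp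
    define e' where "e' = min e d"
    have e': "e' > 0" "e' \<le> e" "e' \<le> d" using e d by (auto simp: e'_def)
    note s0 = sig[OF z0N1]
    define V where "V = {z \<in> N1. G (\<sigma> z0 - e', z) < c0 \<and> c0 < G (\<sigma> z0 + e', z)}"
    have "V = N1 \<inter> {z \<in> topspace X. G (\<sigma> z0 - e', z) \<in> {..<c0}} \<inter> {z \<in> topspace X. G (\<sigma> z0 + e', z) \<in> {c0<..}}"
      using N1t by (auto simp: V_def)
    also have "openin X \<dots>"
      by (intro openin_Int N1open openin_continuous_map_preimage[OF contGs]) auto
    finally have Vopen: "openin X V" .
    have "g (H (\<sigma> z0 - e') z0) < g (H (\<sigma> z0) z0)" "g (H (\<sigma> z0) z0) < g (H (\<sigma> z0 + e') z0)"
      using mono z0N1 N1N s0 e' d by auto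
    then have z0V: "z0 \<in> V" using s0 z0N1 by (auto simp: V_def GG)
    show "\<exists>U. openin (subtopology X N1) U \<and> z0 \<in> U \<and> (\<forall>y\<in>U. \<bar>\<sigma> y - \<sigma> z0\<bar> < e)"
    proof (intro exI conjI ballI)
      show "openin (subtopology X N1) V" using Vopen N1open
        by (simp add: openin_open_subtopology V_def)
      show "z0 \<in> V" by fact
      fix z assume zV: "z \<in> V"
      then have zN1: "z \<in> N1" and zN: "z \<in> N" and l: "G (\<sigma> z0 - e', z) < c0" and r: "c0 < G (\<sigma> z0 + e', z)"
        using N1N by (auto simp: V_def)
      note sz = sig[OF zN1]
      have "\<not> \<sigma> z \<le> \<sigma> z0 - e'"
      proof
        assume le: "\<sigma> z \<le> \<sigma> z0 - e'"
        have "G (\<sigma> z, z) \<le> G (\<sigma> z0 - e', z)"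
        proof (cases "\<sigma> z = \<sigma> z0 - e'")
          case False
          then have "g (H (\<sigma> z) z) < g (H (\<sigma> z0 - e') z)"
            using mono zN le sz s0 e' d by auto
          then show ?thesis by (simp add: GG)
        qed simp
        then show False using sz l by simp
      qed
      moreover have "\<not> \<sigma> z0 + e' \<le> \<sigma> z"
      proof
        assume le: "\<sigma> z0 + e' \<le> \<sigma> z"
        have "G (\<sigma> z0 + e', z) \<le> G (\<sigma> z, z)"
        proof (cases "\<sigma> z = \<sigma> z0 + e'")
          case False
          then have "g (H (\<sigma> z0 + e') z) < g (H (\<sigma> z) z)"
            using mono zN le sz s0 e' d by auto
          then show ?thesis by (simp add: GG)
        qed simp
        then show False using sz r by simp
      qed
      ultimately show "\<bar>\<sigma> z - \<sigma> z0\<bar> < e" using e' by linarith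
    qed
  qed
  define \<pi> where "\<pi> z = H (\<sigma> z) z" for z
  have contpi: "continuous_map (subtopology X N1) X \<pi>"
  proof -
    have "continuous_map (subtopology X N1) (prod_topology euclideanreal X) (\<lambda>z. (\<sigma> z, z))"
      using contsig by (auto simp: continuous_map_pairwise o_def continuous_map_from_subtopology)
    from continuous_map_compose[OF this contH]
    have "continuous_map (subtopology X N1) X (\<lambda>z. H (\<sigma> z) z)" by (simp add: o_def)
    moreover have "\<pi> = (\<lambda>z. H (\<sigma> z) z)" by (simp add: fun_eq_iff \<pi>_def)
    ultimately show ?thesis by simp
  qed
  have eqv: "\<sigma> (H t z) = \<sigma> z - t \<and> \<pi> (H t z) = \<pi> z"
    if z: "z \<in> N1" and Hz: "H t z \<in> N1" and st: "\<bar>\<sigma> z - t\<bar> < \<delta>" for z t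
  proof -
    have zt: "z \<in> topspace X" using z N1t by blast
    have "G (\<sigma> z - t, H t z) = c0" using sig[OF z] by (simp add: GG Hadd[OF zt])
    then have 1: "\<sigma> (H t z) = \<sigma> z - t" using sig_eq[OF Hz] st by auto
    then show ?thesis by (simp add: \<pi>_def Hadd[OF zt] 1)
  qed
  have sig0: "\<sigma> y = 0" if "y \<in> N1" "g y = c0" for y
    using sig_eq[of y 0] that \<delta> N1t by (auto simp: GG H0)
  define Q where "Q = {p \<in> topspace (prod_topology euclideanreal X). (\<lambda>(t, z). H t z) p \<in> N1}"
  have Q: "openin (prod_topology euclideanreal X) Q"
    unfolding Q_def by (rule openin_continuous_map_preimage[OF contH N1open])
  have "(0, x) \<in> Q" using xt xN1 by (simp add: Q_def H0)
  then obtain U0 N2 where U0: "openin euclideanreal U0" "openin X N2" "0 \<in> U0" "x \<in> N2" "U0 \<times> N2 \<subseteq> Q"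
    using Q unfolding openin_prod_topology_alt by blast
  obtain \<epsilon>0 where \<epsilon>0: "\<epsilon>0 > 0" "ball 0 \<epsilon>0 \<subseteq> U0"
    using U0(1,3) by (metis open_contains_ball open_openin)
  have HN1: "H s y \<in> N1" if "\<bar>s\<bar> < \<epsilon>0" "y \<in> N2" for s y
  proof -
    have "s \<in> U0" using that \<epsilon>0 by (auto simp: dist_real_def)
    then have "(s, y) \<in> Q" using that U0(5) by blast
    then show ?thesis by (simp add: Q_def)
  qed
  define \<epsilon> where "\<epsilon> = min \<epsilon>0 d"
  have \<epsilon>: "\<epsilon> > 0" "\<epsilon> \<le> \<epsilon>0" "\<epsilon> \<le> d" using \<epsilon>0 d by (auto simp: \<epsilon>_def)
  define I where "I = {-\<epsilon><..<\<epsilon>}"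
  define T1 where "T1 = {y \<in> N1 \<inter> N2. g y = c0}"
  define U where "U = {z \<in> N1. \<sigma> z \<in> I \<and> \<pi> z \<in> N1 \<inter> N2}"
  define \<phi> where "\<phi> z = (- \<sigma> z, \<pi> z)" for z
  have T1t: "T1 \<subseteq> topspace X" using N1t by (auto simp: T1_def)
  have UN1: "U \<subseteq> N1" by (auto simp: U_def)
  have Ut: "U \<subseteq> topspace X" using UN1 N1t by blast
  have tsN1: "topspace (subtopology X N1) = N1" using N1t by auto
  have Uopen: "openin X U"
  proof -
    have "openin (subtopology X N1) {z \<in> topspace (subtopology X N1). \<sigma> z \<in> I}"
      by (rule openin_continuous_map_preimage[OF contsig]) (auto simp: I_def)
    moreover have "openin (subtopology X N1) {z \<in> topspace (subtopology X N1). \<pi> z \<in> N1 \<inter> N2}"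
      by (rule openin_continuous_map_preimage[OF contpi]) (use N1open U0(2) in auto)
    ultimately have "openin (subtopology X N1) ({z \<in> topspace (subtopology X N1). \<sigma> z \<in> I} \<inter> {z \<in> topspace (subtopology X N1). \<pi> z \<in> N1 \<inter> N2})"
      by (rule openin_Int)
    moreover have "{z \<in> topspace (subtopology X N1). \<sigma> z \<in> I} \<inter> {z \<in> topspace (subtopology X N1). \<pi> z \<in> N1 \<inter> N2} = U"
      unfolding tsN1 U_def by auto
    ultimately show ?thesis using N1open openin_trans_full by metis
  qed
  have piT: "\<pi> z \<in> T1" if "z \<in> U" for z
    using that sig[of z] by (auto simp: U_def T1_def \<pi>_def GG)
  have psiU: "H s y \<in> U \<and> \<sigma> (H s y) = -s \<and> \<pi> (H s y) = y" if s: "s \<in> I" and y: "y \<in> T1" for s y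
  proof -
    have yN1: "y \<in> N1" and yN2: "y \<in> N2" and gy: "g y = c0" using y by (auto simp: T1_def)
    have yt: "y \<in> topspace X" using yN1 N1t by blast
    have sy: "\<sigma> y = 0" using sig0 yN1 gy .
    have as: "\<bar>s\<bar> < \<epsilon>" using s by (auto simp: I_def)
    have HN: "H s y \<in> N1" using HN1 as \<epsilon> yN2 by auto
    have "\<sigma> (H s y) = \<sigma> y - s \<and> \<pi> (H s y) = \<pi> y"
      using eqv[OF yN1 HN] sy as \<epsilon> d by auto
    moreover have "\<pi> y = y" using sy by (simp add: \<pi>_def H0[OF yt])
    ultimately show ?thesis using HN sy as yN1 yN2 by (auto simp: U_def I_def)
  qed
  have tsI: "topspace (prod_topology (subtopology euclideanreal I) (subtopology X T1)) = I \<times> T1"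
    using T1t by auto
  have tsU: "topspace (subtopology X U) = U" using Ut by auto
  have hm: "homeomorphic_maps (subtopology X U) (prod_topology (subtopology euclideanreal I) (subtopology X T1)) \<phi> (\<lambda>(s, y). H s y)"
    unfolding homeomorphic_maps_def
  proof (intro conjI ballI)
    have c1: "continuous_map (subtopology X U) euclideanreal (\<lambda>z. - \<sigma> z)"
      using continuous_map_from_subtopology_mono[OF contsig UN1] by (rule continuous_map_minus)
    have c2: "continuous_map (subtopology X U) X \<pi>"
      using continuous_map_from_subtopology_mono[OF contpi UN1] .
    show "continuous_map (subtopology X U) (prod_topology (subtopology euclideanreal I) (subtopology X T1)) \<phi>"
      unfolding continuous_map_pairwise continuous_map_in_subtopology
      using c1 c2 piT tsU by (auto simp: o_def \<phi>_def U_def I_def)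
    have "continuous_map (subtopology (prod_topology euclideanreal X) (I \<times> T1)) X (\<lambda>(s, y). H s y)"
      using contH by (rule continuous_map_from_subtopology)
    then show "continuous_map (prod_topology (subtopology euclideanreal I) (subtopology X T1)) (subtopology X U) (\<lambda>(s, y). H s y)"
      unfolding continuous_map_in_subtopology subtopology_Times using psiU tsI by auto
    fix z assume "z \<in> topspace (subtopology X U)"
    then have z: "z \<in> U" using tsU by simp
    then have zt: "z \<in> topspace X" using Ut by blast
    show "(\<lambda>(s, y). H s y) (\<phi> z) = z" by (simp add: \<phi>_def \<pi>_def Hadd[OF zt] H0[OF zt])
  next
    fix p assume "p \<in> topspace (prod_topology (subtopology euclideanreal I) (subtopology X T1))"
    then obtain s y where p: "p = (s, y)" "s \<in> I" "y \<in> T1" using tsI by auto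
    show "\<phi> ((\<lambda>(s, y). H s y) p) = p" using psiU[OF p(2,3)] p(1) by (simp add: \<phi>_def)
  qed
  have act: "\<exists>W. openin (prod_topology euclideanreal (subtopology X U)) W \<and> (0, z) \<in> W \<and>
        (\<forall>t w. (t, w) \<in> W \<longrightarrow> H t w \<in> U \<and> \<phi> (H t w) = (t + fst (\<phi> w), snd (\<phi> w)))"
    if z: "z \<in> U" for z
  proof -
    define W where "W = {p \<in> topspace (prod_topology euclideanreal (subtopology X U)). fst p \<in> {-d<..<d}}
        \<inter> {p \<in> topspace (prod_topology euclideanreal (subtopology X U)). (\<lambda>(t, z). H t z) p \<in> U}"
    have "continuous_map (prod_topology euclideanreal (subtopology X U)) X (\<lambda>(t, z). H t z)"
      unfolding prod_topology_subtopology using contH by (rule continuous_map_from_subtopology)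
    then have o2: "openin (prod_topology euclideanreal (subtopology X U)) {p \<in> topspace (prod_topology euclideanreal (subtopology X U)). (\<lambda>(t, z). H t z) p \<in> U}"
      using Uopen by (rule openin_continuous_map_preimage)
    have o1: "openin (prod_topology euclideanreal (subtopology X U)) {p \<in> topspace (prod_topology euclideanreal (subtopology X U)). fst p \<in> {-d<..<d}}"
      by (rule openin_continuous_map_preimage[OF continuous_map_fst]) auto
    have Wopen: "openin (prod_topology euclideanreal (subtopology X U)) W"
      unfolding W_def using o1 o2 by (rule openin_Int)
    have zt: "z \<in> topspace X" using z Ut by blast
    show ?thesis
    proof (intro exI conjI allI impI)
      show "openin (prod_topology euclideanreal (subtopology X U)) W" by fact
      show "(0, z) \<in> W" using z zt d tsU by (simp add: W_def H0)
      fix t w assume tw: "(t, w) \<in> W"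
      then have w: "w \<in> U" and t: "\<bar>t\<bar> < d" and Hw: "H t w \<in> U" using tsU by (auto simp: W_def)
      show "H t w \<in> U" by fact
      have "\<bar>\<sigma> w\<bar> < \<epsilon>" using w by (auto simp: U_def I_def)
      then have "\<bar>\<sigma> w - t\<bar> < \<delta>" using t \<epsilon> d by linarith
      then have "\<sigma> (H t w) = \<sigma> w - t \<and> \<pi> (H t w) = \<pi> w"
        using eqv[of w t] w Hw UN1 by auto
      then show "\<phi> (H t w) = (t + fst (\<phi> w), snd (\<phi> w))" by (simp add: \<phi>_def)
    qed
  qed
  have sx: "\<sigma> x = 0" using sig0 xN1 by (simp add: c0_def)
  have px: "\<pi> x = x" using sx by (simp add: \<pi>_def H0[OF xt])
  have xU: "x \<in> U" using xN1 U0(4) sx px \<epsilon> by (auto simp: U_def I_def)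
  have phx: "\<phi> x = (0, x)" using sx px by (simp add: \<phi>_def)
  have fc: "flow_chart X H U I (subtopology X T1) \<phi>"
    unfolding flow_chart_def
  proof (intro conjI ballI)
    show "openin X U" "open I" "0 \<in> I" using Uopen \<epsilon> by (auto simp: I_def)
    show "homeomorphic_map (subtopology X U) (prod_topology (subtopology euclideanreal I) (subtopology X T1)) \<phi>"
      using hm homeomorphic_map_maps by blast
  qed (rule act)
  have all: "x \<in> U \<and> flow_chart X H U I (subtopology X T1) \<phi> \<and> \<phi> x = (0, x)"
    using xU fc phx by (intro conjI)
  show ?thesis
    apply (rule exI)+
    apply (rule all)
    done
qed




lemma chart_local:
  assumes "flow_chart X H U I T \<phi>" "w \<in> U"
  shows "\<exists>\<rho>>0. \<forall>t. \<bar>t\<bar> < \<rho> \<longrightarrow> H t w \<in> U \<and> \<phi> (H t w) = (t + fst (\<phi> w), snd (\<phi> w))"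
proof -
  obtain W where W: "openin (prod_topology euclideanreal (subtopology X U)) W" "(0, w) \<in> W"
    "\<And>t w. (t, w) \<in> W \<Longrightarrow> H t w \<in> U \<and> \<phi> (H t w) = (t + fst (\<phi> w), snd (\<phi> w))"
    using assms unfolding flow_chart_def by metis
  obtain U' V' where UV: "openin euclideanreal U'" "openin (subtopology X U) V'" "0 \<in> U'" "w \<in> V'" "U' \<times> V' \<subseteq> W"
    using W(1,2) unfolding openin_prod_topology_alt by blast
  obtain \<rho> where \<rho>: "\<rho> > 0" "ball 0 \<rho> \<subseteq> U'"
    using UV(1,3) by (metis open_contains_ball open_openin)
  show ?thesis
  proof (intro exI conjI allI impI)
    show "\<rho> > 0" by fact
    fix t :: real assume "\<bar>t\<bar> < \<rho>"
    then have "t \<in> U'" using \<rho> by (auto simp: dist_real_def)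
    then have "(t, w) \<in> W" using UV by blast
    then show "H t w \<in> U" "\<phi> (H t w) = (t + fst (\<phi> w), snd (\<phi> w))" using W(3) by auto
  qed
qed

lemma chart_basic:
  assumes "flow_chart X H U I T \<phi>"
  obtains \<psi> :: "real \<times> 'b \<Rightarrow> 'a" where "openin X U" "U \<subseteq> topspace X" "open I"
    "\<And>z. z \<in> U \<Longrightarrow> fst (\<phi> z) \<in> I \<and> snd (\<phi> z) \<in> topspace T \<and> \<psi> (\<phi> z) = z"
    "\<And>s \<tau>. s \<in> I \<Longrightarrow> \<tau> \<in> topspace T \<Longrightarrow> \<psi> (s, \<tau>) \<in> U \<and> \<phi> (\<psi> (s, \<tau>)) = (s, \<tau>)"
    "continuous_map (prod_topology (subtopology euclideanreal I) T) X \<psi>"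
    "continuous_map (subtopology X U) (prod_topology (subtopology euclideanreal I) T) \<phi>"
proof -
  have U: "openin X U" and I: "open I" and hm: "homeomorphic_map (subtopology X U) (prod_topology (subtopology euclideanreal I) T) \<phi>"
    using assms unfolding flow_chart_def by blast+
  have Ut: "U \<subseteq> topspace X" using U openin_subset by blast
  obtain \<psi> where hms: "homeomorphic_maps (subtopology X U) (prod_topology (subtopology euclideanreal I) T) \<phi> \<psi>"
    using hm homeomorphic_map_maps by blast
  have tsU: "topspace (subtopology X U) = U" using Ut by auto
  have tsP: "topspace (prod_topology (subtopology euclideanreal I) T) = I \<times> topspace T" by simp
  have c1: "continuous_map (subtopology X U) (prod_topology (subtopology euclideanreal I) T) \<phi>"
    and c2: "continuous_map (prod_topology (subtopology euclideanreal I) T) (subtopology X U) \<psi>"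
    and e1: "\<And>z. z \<in> U \<Longrightarrow> \<psi> (\<phi> z) = z"
    and e2: "\<And>q. q \<in> I \<times> topspace T \<Longrightarrow> \<phi> (\<psi> q) = q"
    using hms unfolding homeomorphic_maps_def tsU tsP by auto
  show ?thesis
  proof
    show "openin X U" "U \<subseteq> topspace X" "open I" by fact+
    fix z assume z: "z \<in> U"
    have "\<phi> z \<in> I \<times> topspace T"
      using continuous_map_image_subset_topspace[OF c1] z tsU tsP by blast
    then show "fst (\<phi> z) \<in> I \<and> snd (\<phi> z) \<in> topspace T \<and> \<psi> (\<phi> z) = z" using e1 z by auto
  next
    fix s \<tau> assume "s \<in> I" "\<tau> \<in> topspace T"
    then have q: "(s, \<tau>) \<in> I \<times> topspace T" by simp
    have "\<psi> (s, \<tau>) \<in> U"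
      using continuous_map_image_subset_topspace[OF c2] q tsU tsP by blast
    then show "\<psi> (s, \<tau>) \<in> U \<and> \<phi> (\<psi> (s, \<tau>)) = (s, \<tau>)" using e2 q by auto
  next
    show "continuous_map (prod_topology (subtopology euclideanreal I) T) X \<psi>"
      using c2 continuous_map_in_subtopology by blast
  qed (rule c1)
qed




lemma chart_change:
  assumes A: "continuous_real_action X H"
    and c1: "flow_chart X H U1 I1 T1 \<phi>1" and c2: "flow_chart X H U2 I2 T2 \<phi>2" and p: "p \<in> U1 \<inter> U2"
  shows "\<exists>V sf tf. openin X V \<and> p \<in> V \<and> V \<subseteq> U1 \<inter> U2 \<and>
      continuous_map (subtopology T1 (snd ` \<phi>1 ` V)) euclideanreal sf \<and>
      continuous_map (subtopology T1 (snd ` \<phi>1 ` V)) T2 tf \<and>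
      (\<forall>z\<in>V. \<phi>2 z = (fst (\<phi>1 z) + sf (snd (\<phi>1 z)), tf (snd (\<phi>1 z))))"
proof -
  note H0 = action_facts(2)[OF A] and Hadd = action_facts(3)[OF A] and Hts = action_facts(4)[OF A]
  obtain \<psi>1 where U1: "openin X U1" "U1 \<subseteq> topspace X" "open I1"
    and a1: "\<And>z. z \<in> U1 \<Longrightarrow> fst (\<phi>1 z) \<in> I1 \<and> snd (\<phi>1 z) \<in> topspace T1 \<and> \<psi>1 (\<phi>1 z) = z"
    and b1: "\<And>s \<tau>. s \<in> I1 \<Longrightarrow> \<tau> \<in> topspace T1 \<Longrightarrow> \<psi>1 (s, \<tau>) \<in> U1 \<and> \<phi>1 (\<psi>1 (s, \<tau>)) = (s, \<tau>)"
    and c\<psi>1: "continuous_map (prod_topology (subtopology euclideanreal I1) T1) X \<psi>1"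
    and c\<phi>1: "continuous_map (subtopology X U1) (prod_topology (subtopology euclideanreal I1) T1) \<phi>1"
    using chart_basic[OF c1] by blast
  obtain \<psi>2 where U2: "openin X U2" "U2 \<subseteq> topspace X" "open I2"
    and a2: "\<And>z. z \<in> U2 \<Longrightarrow> fst (\<phi>2 z) \<in> I2 \<and> snd (\<phi>2 z) \<in> topspace T2 \<and> \<psi>2 (\<phi>2 z) = z"
    and b2: "\<And>s \<tau>. s \<in> I2 \<Longrightarrow> \<tau> \<in> topspace T2 \<Longrightarrow> \<psi>2 (s, \<tau>) \<in> U2 \<and> \<phi>2 (\<psi>2 (s, \<tau>)) = (s, \<tau>)"
    and c\<psi>2: "continuous_map (prod_topology (subtopology euclideanreal I2) T2) X \<psi>2"
    and c\<phi>2: "continuous_map (subtopology X U2) (prod_topology (subtopology euclideanreal I2) T2) \<phi>2"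
    using chart_basic[OF c2] by blast
  define s0 where "s0 = fst (\<phi>1 p)"
  define \<tau>0 where "\<tau>0 = snd (\<phi>1 p)"
  have pU1: "p \<in> U1" and pU2: "p \<in> U2" using p by auto
  have s0: "s0 \<in> I1" and \<tau>0: "\<tau>0 \<in> topspace T1" and \<phi>p: "\<phi>1 p = (s0, \<tau>0)"
    using a1[OF pU1] by (auto simp: s0_def \<tau>0_def)
  define Q where "Q = {q \<in> topspace (prod_topology (subtopology euclideanreal I1) T1). \<psi>1 q \<in> U2}"
  have Q: "openin (prod_topology (subtopology euclideanreal I1) T1) Q"
    unfolding Q_def using c\<psi>1 U2(1) by (rule openin_continuous_map_preimage)
  have "\<psi>1 (s0, \<tau>0) = p" using a1[OF pU1] \<phi>p by simp
  then have "(s0, \<tau>0) \<in> Q" using s0 \<tau>0 pU2 by (simp add: Q_def)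
  then obtain J0 O' where JO: "openin (subtopology euclideanreal I1) J0" "openin T1 O'" "s0 \<in> J0" "\<tau>0 \<in> O'" "J0 \<times> O' \<subseteq> Q"
    using Q unfolding openin_prod_topology_alt by blast
  have I1o: "openin euclideanreal I1" using U1(3) open_openin by blast
  have "openin euclideanreal J0 \<and> J0 \<subseteq> I1"
    using JO(1) openin_open_subtopology[OF I1o] by blast
  then have J0: "open J0" "J0 \<subseteq> I1" using open_openin by blast+
  obtain r where r: "r > 0" "ball s0 r \<subseteq> J0" using J0(1) JO(3) open_contains_ball by blast
  define J where "J = ball s0 r"
  have Jc: "connected J" by (simp add: J_def)
  have JI: "J \<subseteq> I1" using r J0 by (auto simp: J_def)
  have s0J: "s0 \<in> J" using r by (simp add: J_def)
  have O't: "O' \<subseteq> topspace T1" using JO(2) openin_subset by blast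
  define V where "V = {z \<in> U1. \<phi>1 z \<in> J \<times> O'}"
  have inU2: "\<psi>1 (u, \<tau>) \<in> U2" if "u \<in> J" "\<tau> \<in> O'" for u \<tau>
  proof -
    have "(u, \<tau>) \<in> Q" using that r JO(5) by (auto simp: J_def)
    then show ?thesis by (simp add: Q_def)
  qed
  have Vsub: "V \<subseteq> U1 \<inter> U2"
  proof
    fix z assume z: "z \<in> V"
    then have zU1: "z \<in> U1" and "\<phi>1 z \<in> J \<times> O'" by (auto simp: V_def)
    then have "\<psi>1 (\<phi>1 z) \<in> U2" using inU2 by (cases "\<phi>1 z") auto
    then show "z \<in> U1 \<inter> U2" using a1[OF zU1] zU1 by simp
  qed
  have Vopen: "openin X V"
  proof -
    have "openin euclideanreal J" unfolding J_def using open_ball open_openin by blast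
    then have "openin (subtopology euclideanreal I1) J"
      using openin_open_subtopology[OF I1o] JI by blast
    then have "openin (prod_topology (subtopology euclideanreal I1) T1) (J \<times> O')"
      using JO(2) by (simp add: openin_prod_Times_iff)
    then have "openin (subtopology X U1) {z \<in> topspace (subtopology X U1). \<phi>1 z \<in> J \<times> O'}"
      by (rule openin_continuous_map_preimage[OF c\<phi>1])
    moreover have "{z \<in> topspace (subtopology X U1). \<phi>1 z \<in> J \<times> O'} = V"
      using U1(2) by (auto simp: V_def)
    ultimately show ?thesis using U1(1) openin_trans_full by metis
  qed
  have pV: "p \<in> V" using pU1 \<phi>p s0J JO(4) by (simp add: V_def)
  have img: "snd ` \<phi>1 ` V = O'"
  proof
    show "snd ` \<phi>1 ` V \<subseteq> O'" by (auto simp: V_def)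
    show "O' \<subseteq> snd ` \<phi>1 ` V"
    proof
      fix \<tau> assume \<tau>: "\<tau> \<in> O'"
      then have "\<psi>1 (s0, \<tau>) \<in> V" "\<phi>1 (\<psi>1 (s0, \<tau>)) = (s0, \<tau>)"
        using b1[OF s0, of \<tau>] O't s0J by (auto simp: V_def)
      then show "\<tau> \<in> snd ` \<phi>1 ` V" by (metis image_eqI snd_conv)
    qed
  qed
  have K1: "\<psi>1 (u, \<tau>) = H (u - s) z" if z: "z \<in> V" and \<phi>z: "\<phi>1 z = (s, \<tau>)" and u: "u \<in> J" for z s \<tau> u
  proof -
    have zU1: "z \<in> U1" and sJ: "s \<in> J" and \<tau>O: "\<tau> \<in> O'" using z \<phi>z by (auto simp: V_def)
    have \<tau>t: "\<tau> \<in> topspace T1" using \<tau>O O't by blast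
    define f where "f u = H (s - u) (\<psi>1 (u, \<tau>))" for u
    have "f s = f u"
    proof (rule connected_local_const[OF Jc sJ u], rule ballI)
      fix a assume aJ: "a \<in> J"
      define w where "w = \<psi>1 (a, \<tau>)"
      have wU1: "w \<in> U1" and \<phi>w: "\<phi>1 w = (a, \<tau>)" using b1[of a \<tau>] aJ JI \<tau>t by (auto simp: w_def)
      have wt: "w \<in> topspace X" using wU1 U1(2) by blast
      obtain \<rho> where \<rho>: "\<rho> > 0" "\<And>t. \<bar>t\<bar> < \<rho> \<Longrightarrow> H t w \<in> U1 \<and> \<phi>1 (H t w) = (t + fst (\<phi>1 w), snd (\<phi>1 w))"
        using chart_local[OF c1 wU1] by blast
      show "\<forall>\<^sub>F b in at a within J. f a = f b"
        unfolding eventually_at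
      proof (intro exI conjI ballI impI)
        show "\<rho> > 0" by fact
        fix b assume "b \<in> J" "b \<noteq> a \<and> dist b a < \<rho>"
        then have "\<bar>b - a\<bar> < \<rho>" by (simp add: dist_real_def)
        from \<rho>(2)[OF this] \<phi>w have "H (b - a) w \<in> U1" "\<phi>1 (H (b - a) w) = (b, \<tau>)" by auto
        then have "\<psi>1 (b, \<tau>) = H (b - a) w" using a1 by metis
        then have "f b = H (s - b) (H (b - a) w)" by (simp add: f_def)
        also have "\<dots> = H (s - a) w" by (simp add: Hadd[OF wt])
        also have "\<dots> = f a" by (simp add: f_def w_def)
        finally show "f a = f b" by simp
      qed
    qed
    have zt: "z \<in> topspace X" using zU1 U1(2) by blast
    have "\<psi>1 (s, \<tau>) = z" using a1[OF zU1] \<phi>z by simp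
    then have fs: "f s = z" by (simp add: f_def H0[OF zt])
    have w'U: "\<psi>1 (u, \<tau>) \<in> U1" using b1[of u \<tau>] u JI \<tau>t by auto
    then have w't: "\<psi>1 (u, \<tau>) \<in> topspace X" using U1(2) by blast
    have "H (u - s) (f u) = \<psi>1 (u, \<tau>)" by (simp add: f_def Hadd[OF w't] H0[OF w't])
    then show ?thesis using fs \<open>f s = f u\<close> by simp
  qed
  define sf where "sf \<tau> = fst (\<phi>2 (\<psi>1 (s0, \<tau>))) - s0" for \<tau>
  define tf where "tf \<tau> = snd (\<phi>2 (\<psi>1 (s0, \<tau>)))" for \<tau>
  have cE: "continuous_map (subtopology T1 O') (subtopology X U2) (\<lambda>\<tau>. \<psi>1 (s0, \<tau>))"
  proof -
    have "continuous_map (subtopology T1 O') (prod_topology (subtopology euclideanreal I1) T1) (\<lambda>\<tau>. (s0, \<tau>))"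
      using s0 by (auto simp: continuous_map_pairwise o_def continuous_map_from_subtopology)
    from continuous_map_compose[OF this c\<psi>1]
    have "continuous_map (subtopology T1 O') X (\<lambda>\<tau>. \<psi>1 (s0, \<tau>))" by (simp add: o_def)
    then show ?thesis unfolding continuous_map_in_subtopology using inU2 s0J by auto
  qed
  from continuous_map_compose[OF cE c\<phi>2]
  have cF: "continuous_map (subtopology T1 O') (prod_topology (subtopology euclideanreal I2) T2) (\<lambda>\<tau>. \<phi>2 (\<psi>1 (s0, \<tau>)))"
    by (simp add: o_def)
  then have cF1: "continuous_map (subtopology T1 O') (subtopology euclideanreal I2) (\<lambda>\<tau>. fst (\<phi>2 (\<psi>1 (s0, \<tau>))))"
    and cF2: "continuous_map (subtopology T1 O') T2 (\<lambda>\<tau>. snd (\<phi>2 (\<psi>1 (s0, \<tau>))))"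
    unfolding continuous_map_pairwise by (simp_all add: o_def)
  have csf: "continuous_map (subtopology T1 O') euclideanreal sf"
    unfolding sf_def using cF1 unfolding continuous_map_in_subtopology
    by (intro continuous_map_diff) auto
  have ctf: "continuous_map (subtopology T1 O') T2 tf"
    unfolding tf_def using cF2 by simp
  have main: "\<phi>2 z = (fst (\<phi>1 z) + sf (snd (\<phi>1 z)), tf (snd (\<phi>1 z)))" if z: "z \<in> V" for z
  proof -
    obtain s \<tau> where \<phi>z: "\<phi>1 z = (s, \<tau>)" by (cases "\<phi>1 z")
    have zU1: "z \<in> U1" and sJ: "s \<in> J" and \<tau>O: "\<tau> \<in> O'" using z \<phi>z by (auto simp: V_def)
    have \<tau>t: "\<tau> \<in> topspace T1" using \<tau>O O't by blast
    define z0 where "z0 = \<psi>1 (s0, \<tau>)"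
    have z0U1: "z0 \<in> U1" and \<phi>z0: "\<phi>1 z0 = (s0, \<tau>)" using b1[OF s0 \<tau>t] by (auto simp: z0_def)
    have z0V: "z0 \<in> V" using z0U1 \<phi>z0 s0J \<tau>O by (simp add: V_def)
    have z0t: "z0 \<in> topspace X" using z0U1 U1(2) by blast
    have path: "\<psi>1 (u, \<tau>) = H (u - s0) z0" if "u \<in> J" for u
      using K1[OF z0V \<phi>z0 that] .
    define f2 where "f2 u = (fst (\<phi>2 (\<psi>1 (u, \<tau>))) - u, snd (\<phi>2 (\<psi>1 (u, \<tau>))))" for u
    have "f2 s0 = f2 s"
    proof (rule connected_local_const[OF Jc s0J sJ], rule ballI)
      fix a assume aJ: "a \<in> J"
      define w where "w = \<psi>1 (a, \<tau>)"
      have wU2: "w \<in> U2" using inU2 aJ \<tau>O by (simp add: w_def)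
      obtain \<rho> where \<rho>: "\<rho> > 0" "\<And>t. \<bar>t\<bar> < \<rho> \<Longrightarrow> H t w \<in> U2 \<and> \<phi>2 (H t w) = (t + fst (\<phi>2 w), snd (\<phi>2 w))"
        using chart_local[OF c2 wU2] by blast
      show "\<forall>\<^sub>F b in at a within J. f2 a = f2 b"
        unfolding eventually_at
      proof (intro exI conjI ballI impI)
        show "\<rho> > 0" by fact
        fix b assume bJ: "b \<in> J" and "b \<noteq> a \<and> dist b a < \<rho>"
        then have "\<bar>b - a\<bar> < \<rho>" by (simp add: dist_real_def)
        from \<rho>(2)[OF this] have e: "\<phi>2 (H (b - a) w) = (b - a + fst (\<phi>2 w), snd (\<phi>2 w))" by auto
        have "\<psi>1 (b, \<tau>) = H (b - s0) z0" using path[OF bJ] .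
        also have "\<dots> = H (b - a) (H (a - s0) z0)" by (simp add: Hadd[OF z0t])
        also have "\<dots> = H (b - a) w" using path[OF aJ] by (simp add: w_def)
        finally show "f2 a = f2 b" using e by (simp add: f2_def w_def)
      qed
    qed
    moreover have "\<psi>1 (s, \<tau>) = z" using a1[OF zU1] \<phi>z by simp
    ultimately show ?thesis using \<phi>z by (simp add: f2_def sf_def tf_def z0_def prod_eq_iff)
  qed
  have all: "openin X V \<and> p \<in> V \<and> V \<subseteq> U1 \<inter> U2 \<and>
      continuous_map (subtopology T1 (snd ` \<phi>1 ` V)) euclideanreal sf \<and>
      continuous_map (subtopology T1 (snd ` \<phi>1 ` V)) T2 tf \<and>
      (\<forall>z\<in>V. \<phi>2 z = (fst (\<phi>1 z) + sf (snd (\<phi>1 z)), tf (snd (\<phi>1 z))))"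
    unfolding img by (intro conjI ballI Vopen pV Vsub csf ctf main)
  show ?thesis
    apply (rule exI)+
    apply (rule all)
    done
qed


theorem lemma5p1:
  fixes X :: "'a topology" and H :: "real \<Rightarrow> 'a \<Rightarrow> 'a"
  assumes "completely_Hausdorff X"
    and "continuous_real_action X H"
    and "locally_free X H"
  shows "(\<forall>x\<in>topspace X. \<exists>U I (T :: 'a topology) \<phi> \<tau>\<^sub>0.
            x \<in> U \<and> flow_chart X H U I T \<phi> \<and> \<phi> x = (0, \<tau>\<^sub>0))
       \<and> (\<forall>U\<^sub>1 I\<^sub>1 (T\<^sub>1 :: 'b topology) \<phi>\<^sub>1 U\<^sub>2 I\<^sub>2 (T\<^sub>2 :: 'c topology) \<phi>\<^sub>2.
            flow_chart X H U\<^sub>1 I\<^sub>1 T\<^sub>1 \<phi>\<^sub>1 \<and> flow_chart X H U\<^sub>2 I\<^sub>2 T\<^sub>2 \<phi>\<^sub>2 \<longrightarrow>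
            (\<forall>p\<in>U\<^sub>1 \<inter> U\<^sub>2. \<exists>V sf tf.
               openin X V \<and> p \<in> V \<and> V \<subseteq> U\<^sub>1 \<inter> U\<^sub>2 \<and>
               continuous_map (subtopology T\<^sub>1 (snd ` \<phi>\<^sub>1 ` V)) euclideanreal sf \<and>
               continuous_map (subtopology T\<^sub>1 (snd ` \<phi>\<^sub>1 ` V)) T\<^sub>2 tf \<and>
               (\<forall>z\<in>V. \<phi>\<^sub>2 z = (fst (\<phi>\<^sub>1 z) + sf (snd (\<phi>\<^sub>1 z)), tf (snd (\<phi>\<^sub>1 z))))))"
proof (intro conjI ballI allI impI)
  fix x assume x: "x \<in> topspace X"
  obtain g N \<delta> where g: "continuous_map X euclideanreal g" and N: "openin X N" and xN: "x \<in> N"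
    and \<delta>: "\<delta> > 0"
    and mono: "\<forall>z\<in>N. \<forall>s1 s2. -\<delta> < s1 \<longrightarrow> s1 < s2 \<longrightarrow> s2 < \<delta> \<longrightarrow> g (H s1 z) < g (H s2 z)"
    using mono_fn[OF assms x] by blast
  show "\<exists>U I (T :: 'a topology) \<phi> \<tau>\<^sub>0. x \<in> U \<and> flow_chart X H U I T \<phi> \<and> \<phi> x = (0, \<tau>\<^sub>0)"
    by (rule flow_box[OF assms(2) g N xN \<delta> mono])
next
  fix U\<^sub>1 I\<^sub>1 and T\<^sub>1 :: "'b topology" and \<phi>\<^sub>1 U\<^sub>2 I\<^sub>2 and T\<^sub>2 :: "'c topology" and \<phi>\<^sub>2 p
  assume c: "flow_chart X H U\<^sub>1 I\<^sub>1 T\<^sub>1 \<phi>\<^sub>1 \<and> flow_chart X H U\<^sub>2 I\<^sub>2 T\<^sub>2 \<phi>\<^sub>2" and p: "p \<in> U\<^sub>1 \<inter> U\<^sub>2"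
  show "\<exists>V sf tf. openin X V \<and> p \<in> V \<and> V \<subseteq> U\<^sub>1 \<inter> U\<^sub>2 \<and>
               continuous_map (subtopology T\<^sub>1 (snd ` \<phi>\<^sub>1 ` V)) euclideanreal sf \<and>
               continuous_map (subtopology T\<^sub>1 (snd ` \<phi>\<^sub>1 ` V)) T\<^sub>2 tf \<and>
               (\<forall>z\<in>V. \<phi>\<^sub>2 z = (fst (\<phi>\<^sub>1 z) + sf (snd (\<phi>\<^sub>1 z)), tf (snd (\<phi>\<^sub>1 z))))"
    using chart_change[OF assms(2) conjunct1[OF c] conjunct2[OF c] p] .
qed

end
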